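(* Let $k=2$, $\Phi\equiv0$, $H$ convex, $f\ge0$, and $g=fH''\ge0$. Consider the cell-average update on a uniform mesh with zero-flux boundary conditions $$\bar u_j^{n+1}=\bar u_j^n+\mu h\,\{g(u_h^n)\}\widehat{\partial_xu_h^n}\Big|_{\partial I_j},\qquad j=1,\dots,N,$$ where $\mu=\Delta t/h^2$, $w|_{\partial I_j}:=w(x_{j+1/2})-w(x_{j-1/2})$, $\widehat{\partial_x u_h}=\beta_0\frac{[u_h]}{h}+\{\partial_xu_h\}+\beta_1h[\partial_x^2u_h]$ at interior interfaces, and the boundary terms at $x_{1/2}$ and $x_{N+1/2}$ are zero. Suppose $$\frac18<\beta_1<\frac14,\qquad \beta_0\ge1,$$ and $c_1\le c_2$ are constants with $u_h^n(x)\in[c_1,c_2]$ for all $x\in S_j=x_j+\frac h2\{-1,0,1\}$ and all $j=1,\dots,N$. If $$\mu\le\frac{1}{12\max_{j}|g_{j-1/2}|}\min\left\{\frac{1}{\beta_0+8\beta_1-2},\frac{1}{1-4\beta_1}\right\},$$ where $g_{j+1/2}=\{g(u_h^n)\}|_{x_{j+1/2}}$ for interior interfaces and $g_{1/2}=g_{N+1/2}=0$, then $\bar u_j^{n+1}\in[c_1,c_2]$ for all $j$.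
   Context: Uniform mesh of $\Omega=[a,b]$ with cells $I_j=(x_{j-1/2},x_{j+1/2})$ of length $h$, centers $x_j$; $u_h^n\in V_h=\{v: v|_{I_j}\in P^2(I_j)\}$, and $\bar u_j^n=\frac1h\int_{I_j}u_h^n\,dx$. At interior interfaces, $v^\pm$ are right/left limits, $[v]=v^+-v^-$, $\{v\}=(v^++v^-)/2$. The update is the cell-average equation of the forward Euler DG scheme for $\partial_tu=\partial_x(f(u)H''(u)\partial_xu)$ (i.e. the scheme with $\Phi=0$, $q_h=u_h$ and $f$ replaced by $fH''$). *)

theory Defs
  imports "HOL-Analysis.Analysis" "HOL-Computational_Algebra.Polynomial"
begin

text \<open>Uniform mesh of [a, a + N h]: cell I_j = (x_{j-1/2}, x_{j+1/2}), j = 1..N.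
  The interface point x_{j+1/2} is xif a h j = a + j h (j = 0..N).
  The DG solution u_h on cell j is the polynomial p j (degree at most 2).\<close>

definition xif :: "real \<Rightarrow> real \<Rightarrow> nat \<Rightarrow> real" where
  "xif a h j = a + real j * h"

definition xc :: "real \<Rightarrow> real \<Rightarrow> nat \<Rightarrow> real" where
  "xc a h j = a + (real j - 1/2) * h"

definition cell_avg :: "real \<Rightarrow> real \<Rightarrow> (nat \<Rightarrow> real poly) \<Rightarrow> nat \<Rightarrow> real" where
  "cell_avg a h p j = (1 / h) * integral {xif a h (j - 1) .. xif a h j} (\<lambda>x. poly (p j) x)"

definition g_if :: "(real \<Rightarrow> real) \<Rightarrow> real \<Rightarrow> real \<Rightarrow> nat \<Rightarrow> (nat \<Rightarrow> real poly) \<Rightarrow> nat \<Rightarrow> real" where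
  "g_if g a h N p j = (if 1 \<le> j \<and> j < N then
      (g (poly (p (Suc j)) (xif a h j)) + g (poly (p j) (xif a h j))) / 2 else 0)"

definition dflux :: "real \<Rightarrow> real \<Rightarrow> real \<Rightarrow> real \<Rightarrow> (nat \<Rightarrow> real poly) \<Rightarrow> nat \<Rightarrow> real" where
  "dflux \<beta>0 \<beta>1 a h p j =
     (let x = xif a h j; pr = p (Suc j); pl = p j in
       \<beta>0 * (poly pr x - poly pl x) / h
     + (poly (pderiv pr) x + poly (pderiv pl) x) / 2
     + \<beta>1 * h * (poly (pderiv (pderiv pr)) x - poly (pderiv (pderiv pl)) x))"

definition flux :: "(real \<Rightarrow> real) \<Rightarrow> real \<Rightarrow> real \<Rightarrow> real \<Rightarrow> real \<Rightarrow> nat \<Rightarrow> (nat \<Rightarrow> real poly) \<Rightarrow> nat \<Rightarrow> real" where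
  "flux g \<beta>0 \<beta>1 a h N p j =
     (if 1 \<le> j \<and> j < N then g_if g a h N p j * dflux \<beta>0 \<beta>1 a h p j else 0)"

definition avg_update :: "(real \<Rightarrow> real) \<Rightarrow> real \<Rightarrow> real \<Rightarrow> real \<Rightarrow> real \<Rightarrow> real \<Rightarrow> nat \<Rightarrow> (nat \<Rightarrow> real poly) \<Rightarrow> nat \<Rightarrow> real" where
  "avg_update g \<beta>0 \<beta>1 \<mu> a h N p j =
     cell_avg a h p j + \<mu> * h * (flux g \<beta>0 \<beta>1 a h N p j - flux g \<beta>0 \<beta>1 a h N p (j - 1))"

end

theory Submission imports Defs begin

lemma quad_rep:
  fixes q :: "real poly"
  assumes "degree q \<le> 2"
  shows "q = [:coeff q 0, coeff q 1, coeff q 2:]"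
proof (rule poly_eqI)
  fix n show "coeff q n = coeff [:coeff q 0, coeff q 1, coeff q 2:] n"
  proof (cases "n \<le> 2")
    case True then have "n = 0 \<or> n = 1 \<or> n = 2" by auto
    then show ?thesis by (auto simp: coeff_pCons)
  next
    case False
    then obtain k where k: "n = Suc (Suc (Suc k))" by (metis add_2_eq_Suc le_add1 not_less_eq_eq less_imp_Suc_add not_le)
    show ?thesis using False assms by (simp add: k coeff_eq_0 coeff_pCons)
  qed
qed

lemma quad_vals:
  fixes q :: "real poly"
  assumes "degree q \<le> 2"
  shows "poly q y = coeff q 0 + coeff q 1 * y + coeff q 2 * y^2"
    "poly (pderiv q) y = coeff q 1 + 2 * coeff q 2 * y"
    "poly (pderiv (pderiv q)) y = 2 * coeff q 2"
proof -
  have e: "q = [:coeff q 0, coeff q 1, coeff q 2:]" by (rule quad_rep[OF assms])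
  show "poly q y = coeff q 0 + coeff q 1 * y + coeff q 2 * y^2"
    by (subst e) (simp add: algebra_simps power2_eq_square)
  show "poly (pderiv q) y = coeff q 1 + 2 * coeff q 2 * y"
    by (subst e) (simp add: pderiv_pCons algebra_simps)
  show "poly (pderiv (pderiv q)) y = 2 * coeff q 2"
    by (subst e) (simp add: pderiv_pCons algebra_simps)
qed

lemma quad_int:
  fixes q :: "real poly"
  assumes "degree q \<le> 2" "d > 0"
  shows "(1 / (2*d)) * integral {m - d .. m + d} (poly q) =
     (poly q (m - d) + 4 * poly q m + poly q (m + d)) / 6"
proof -
  define c0 where "c0 = coeff q 0"
  define c1 where "c1 = coeff q 1"
  define c2 where "c2 = coeff q 2"
  have pv: "\<And>y. poly q y = c0 + c1 * y + c2 * y^2" using quad_vals(1)[OF assms(1)] c0_def c1_def c2_def by simp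
  define F where "F = (\<lambda>x::real. c0 * x + c1 * x^2 / 2 + c2 * x^3 / 3)"
  have "\<And>x. (F has_vector_derivative poly q x) (at x within {m-d..m+d})"
    unfolding pv F_def has_real_derivative_iff_has_vector_derivative[symmetric]
    by (auto intro!: derivative_eq_intros simp: power2_eq_square algebra_simps)
  then have "(poly q has_integral F (m+d) - F (m-d)) {m-d..m+d}"
    using assms(2) by (intro fundamental_theorem_of_calculus) auto
  then have "integral {m - d .. m + d} (poly q) = F (m+d) - F (m-d)" by (rule integral_unique)
  then show ?thesis using assms(2) unfolding pv F_def
    by (simp add: field_simps power2_eq_square power3_eq_cube)
qed

lemma dflux_eq:
  fixes p :: "nat \<Rightarrow> real poly"
  assumes "degree (p j) \<le> 2" "degree (p (Suc j)) \<le> 2" "h > 0"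
  shows "h * dflux b0 b1 a h p j =
   (b0 - 3/2 + 4*b1) * poly (p (Suc j)) (xc a h (Suc j) - h/2) + (2 - 8*b1) * poly (p (Suc j)) (xc a h (Suc j))
   + (4*b1 - 1/2) * poly (p (Suc j)) (xc a h (Suc j) + h/2)
   - (4*b1 - 1/2) * poly (p j) (xc a h j - h/2) - (2 - 8*b1) * poly (p j) (xc a h j)
   - (b0 - 3/2 + 4*b1) * poly (p j) (xc a h j + h/2)"
  using assms unfolding dflux_def Let_def xc_def xif_def
  by (simp add: quad_vals[OF assms(1)] quad_vals[OF assms(2)] field_simps power2_eq_square)

lemma flux_eq: "flux g b0 b1 a h N p j = g_if g a h N p j * dflux b0 b1 a h p j"
  unfolding flux_def g_if_def by simp

lemma combo:
  fixes x y t A B C L M R L2 M2 R2 L0 M0 R0 c1 c2 :: real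
  assumes xy: "0 \<le> x" "0 \<le> y" "x \<le> t" "y \<le> t"
    and ABC: "0 \<le> A" "0 \<le> B" "0 \<le> C" "12*t*(A+C) \<le> 1" "6*t*B \<le> 1"
    and LMR: "L \<in> {c1..c2}" "M \<in> {c1..c2}" "R \<in> {c1..c2}"
    and nb: "L2 \<in> {c1..c2}" "M2 \<in> {c1..c2}" "R2 \<in> {c1..c2}"
        "L0 \<in> {c1..c2}" "M0 \<in> {c1..c2}" "R0 \<in> {c1..c2}"
  shows "(L+4*M+R)/6 + x*(A*L2+B*M2+C*R2 - C*L - B*M - A*R)
           - y*(A*L+B*M+C*R - C*L0 - B*M0 - A*R0) \<in> {c1..c2}"
proof -
  have t0: "0 \<le> t" using xy by linarith
  have "x*C + y*A \<le> t*C + t*A" using xy ABC by (intro add_mono mult_right_mono) auto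
  then have cL: "0 \<le> 1/6 - x*C - y*A" using ABC by (simp add: algebra_simps)
  have "x*A + y*C \<le> t*A + t*C" using xy ABC by (intro add_mono mult_right_mono) auto
  then have cR: "0 \<le> 1/6 - x*A - y*C" using ABC by (simp add: algebra_simps)
  have "(x+y)*B \<le> (2*t)*B" using xy ABC by (intro mult_right_mono) auto
  then have cM: "0 \<le> 2/3 - B*(x+y)" using ABC by (simp add: algebra_simps)
  let ?e = "(L+4*M+R)/6 + x*(A*L2+B*M2+C*R2 - C*L - B*M - A*R)
           - y*(A*L+B*M+C*R - C*L0 - B*M0 - A*R0)"
  have lo: "?e - c1 = (1/6 - x*C - y*A)*(L-c1) + (2/3 - B*(x+y))*(M-c1) + (1/6 - x*A - y*C)*(R-c1)
     + x*(A*(L2-c1)+B*(M2-c1)+C*(R2-c1)) + y*(C*(L0-c1)+B*(M0-c1)+A*(R0-c1))"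
    by (simp add: field_simps)
  have hi: "c2 - ?e = (1/6 - x*C - y*A)*(c2-L) + (2/3 - B*(x+y))*(c2-M) + (1/6 - x*A - y*C)*(c2-R)
     + x*(A*(c2-L2)+B*(c2-M2)+C*(c2-R2)) + y*(C*(c2-L0)+B*(c2-M0)+A*(c2-R0))"
    by (simp add: field_simps)
  have "0 \<le> ?e - c1" unfolding lo using cL cM cR xy ABC LMR nb
    by (intro add_nonneg_nonneg mult_nonneg_nonneg) auto
  moreover have "0 \<le> c2 - ?e" unfolding hi using cL cM cR xy ABC LMR nb
    by (intro add_nonneg_nonneg mult_nonneg_nonneg) auto
  ultimately show ?thesis by auto
qed

theorem theorem3p4:
  fixes f H H1 H2 g :: "real \<Rightarrow> real"
    and a h dt \<beta>0 \<beta>1 c1 c2 :: real and N :: nat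
    and p :: "nat \<Rightarrow> real poly"
  assumes h_pos: "h > 0" and N_pos: "N \<ge> 1" and dt_pos: "dt > 0"
    and H1: "\<And>u. (H has_real_derivative H1 u) (at u)"
    and H2: "\<And>u. (H1 has_real_derivative H2 u) (at u)"
    and H_convex: "convex_on UNIV H"
    and f_nonneg: "\<And>u. f u \<ge> 0"
    and g_def: "g = (\<lambda>u. f u * H2 u)"
    and g_nonneg: "\<And>u. g u \<ge> 0"
    and deg: "\<And>j. j \<in> {1..N} \<Longrightarrow> degree (p j) \<le> 2"
    and beta1: "1/8 < \<beta>1" "\<beta>1 < 1/4" and beta0: "\<beta>0 \<ge> 1"
    and c12: "c1 \<le> c2"
    and bounds: "\<And>j s. j \<in> {1..N} \<Longrightarrow> s \<in> {-1, 0, 1::real} \<Longrightarrow>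
        poly (p j) (xc a h j + s * h / 2) \<in> {c1..c2}"
    and cfl: "dt / h^2 * (12 * Max ((\<lambda>j. \<bar>g_if g a h N p (j - 1)\<bar>) ` {1..N}))
        \<le> min (1 / (\<beta>0 + 8 * \<beta>1 - 2)) (1 / (1 - 4 * \<beta>1))"
  shows "\<forall>j \<in> {1..N}. avg_update g \<beta>0 \<beta>1 (dt / h^2) a h N p j \<in> {c1..c2}"
proof
  fix j assume j: "j \<in> {1..N}"
  define lam where "lam = dt / h^2"
  define S where "S = (\<lambda>j. \<bar>g_if g a h N p (j - 1)\<bar>) ` {1..N}"
  define Gmax where "Gmax = Max S"
  define Gp where "Gp = g_if g a h N p j"
  define Gm where "Gm = g_if g a h N p (j - 1)"
  define A where "A = \<beta>0 - 3/2 + 4*\<beta>1"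
  define B where "B = 2 - 8*\<beta>1"
  define C where "C = 4*\<beta>1 - 1/2"
  have lam0: "lam > 0" unfolding lam_def using dt_pos h_pos by simp
  have fin: "finite S" unfolding S_def by simp
  have gif0: "\<And>i. g_if g a h N p i \<ge> 0" unfolding g_if_def using g_nonneg
    by (simp add: add_nonneg_nonneg)
  have Gm0: "Gm \<ge> 0" and Gp0: "Gp \<ge> 0" unfolding Gm_def Gp_def using gif0 by auto
  have "\<bar>Gm\<bar> \<in> S" unfolding S_def Gm_def using j by blast
  then have GmM: "Gm \<le> Gmax" unfolding Gmax_def using fin Gm0 by (simp add: Max_ge_iff)
  have GpM: "Gp \<le> Gmax"
  proof (cases "j < N")
    case True
    then have "\<bar>Gp\<bar> \<in> S" unfolding S_def Gp_def using j
      by (intro image_eqI[where x="Suc j"]) auto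
    then show ?thesis unfolding Gmax_def using fin Gp0 by (simp add: Max_ge_iff)
  next
    case False
    then have "Gp = 0" unfolding Gp_def g_if_def by simp
    then show ?thesis using GmM Gm0 by simp
  qed
  define t where "t = lam * Gmax"
  define x where "x = lam * Gp"
  define y where "y = lam * Gm"
  have x0: "0 \<le> x" "x \<le> t" unfolding x_def t_def using lam0 Gp0 GpM by auto
  have y0: "0 \<le> y" "y \<le> t" unfolding y_def t_def using lam0 Gm0 GmM by auto
  have ABC: "0 \<le> A" "0 \<le> B" "0 \<le> C" unfolding A_def B_def C_def using beta0 beta1 by auto
  have AC: "A + C = \<beta>0 + 8 * \<beta>1 - 2" "A + C > 0" unfolding A_def C_def using beta0 beta1 by auto
  have c1': "lam * (12 * Gmax) \<le> 1 / (A + C)" using cfl AC unfolding lam_def Gmax_def S_def by simp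
  have "12*t*(A+C) \<le> 1" using c1' AC(2) unfolding t_def by (simp add: le_divide_eq algebra_simps)
  moreover
  have c2': "lam * (12 * Gmax) \<le> 1 / (1 - 4*\<beta>1)" using cfl unfolding lam_def Gmax_def S_def by simp
  have "6*t*B \<le> 1" using c2' beta1 unfolding t_def B_def by (simp add: le_divide_eq algebra_simps)
  ultimately have ABC2: "12*t*(A+C) \<le> 1" "6*t*B \<le> 1" by auto
  have jN: "j \<in> {1..N}" using j .
  have bL: "poly (p j) (xc a h j - h/2) \<in> {c1..c2}" using bounds[OF jN, of "-1"] by simp
  have bM: "poly (p j) (xc a h j) \<in> {c1..c2}" using bounds[OF jN, of "0"] by simp
  have bR: "poly (p j) (xc a h j + h/2) \<in> {c1..c2}" using bounds[OF jN, of "1"] by simp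
  define L where "L = poly (p j) (xc a h j - h/2)"
  define M where "M = poly (p j) (xc a h j)"
  define R where "R = poly (p j) (xc a h j + h/2)"
  obtain L2 M2 R2 where nbp: "L2 \<in> {c1..c2}" "M2 \<in> {c1..c2}" "R2 \<in> {c1..c2}"
    and Xp: "x * (h * dflux \<beta>0 \<beta>1 a h p j) = x * (A*L2+B*M2+C*R2 - C*L - B*M - A*R)"
  proof (cases "j < N")
    case True
    have js: "Suc j \<in> {1..N}" using True by auto
    show ?thesis
      apply (rule that[of "poly (p (Suc j)) (xc a h (Suc j) - h/2)" "poly (p (Suc j)) (xc a h (Suc j))"
            "poly (p (Suc j)) (xc a h (Suc j) + h/2)"])
      using bounds[OF js, of "-1"] bounds[OF js, of "0"] bounds[OF js, of "1"]
        dflux_eq[of p j h \<beta>0 \<beta>1 a, OF deg[OF jN] deg[OF js] h_pos]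
      by (auto simp: A_def B_def C_def L_def M_def R_def)
  next
    case False
    then have "x = 0" unfolding x_def Gp_def g_if_def by simp
    then show ?thesis using that[of c1 c1 c1] c12 by simp
  qed
  obtain L0 M0 R0 where nbm: "L0 \<in> {c1..c2}" "M0 \<in> {c1..c2}" "R0 \<in> {c1..c2}"
    and Xm: "y * (h * dflux \<beta>0 \<beta>1 a h p (j-1)) = y * (A*L+B*M+C*R - C*L0 - B*M0 - A*R0)"
  proof (cases "j \<ge> 2")
    case True
    have js: "j - 1 \<in> {1..N}" and sj: "Suc (j - 1) = j" using True j by auto
    show ?thesis
      apply (rule that[of "poly (p (j-1)) (xc a h (j-1) - h/2)" "poly (p (j-1)) (xc a h (j-1))"
            "poly (p (j-1)) (xc a h (j-1) + h/2)"])
      using bounds[OF js, of "-1"] bounds[OF js, of "0"] bounds[OF js, of "1"]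
        dflux_eq[of p "j-1" h \<beta>0 \<beta>1 a, unfolded sj, OF deg[OF js] deg[OF jN] h_pos]
      by (auto simp: A_def B_def C_def L_def M_def R_def)
  next
    case False
    then have "j - 1 = 0" by simp
    then have "y = 0" unfolding y_def Gm_def g_if_def by simp
    then show ?thesis using that[of c1 c1 c1] c12 by simp
  qed
  have xif1: "xif a h (j - 1) = xc a h j - h/2" and xif2: "xif a h j = xc a h j + h/2"
    using j unfolding xif_def xc_def by (auto simp: of_nat_diff algebra_simps)
  have cavg: "cell_avg a h p j = (L + 4*M + R)/6"
    using quad_int[OF deg[OF jN], of "h/2" "xc a h j"] h_pos
    unfolding cell_avg_def xif1 xif2 L_def M_def R_def by simp
  have "avg_update g \<beta>0 \<beta>1 (dt / h^2) a h N p j =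
      cell_avg a h p j + x * (h * dflux \<beta>0 \<beta>1 a h p j) - y * (h * dflux \<beta>0 \<beta>1 a h p (j-1))"
    unfolding avg_update_def flux_eq x_def y_def lam_def Gp_def Gm_def by (simp add: algebra_simps)
  also have "\<dots> = (L+4*M+R)/6 + x*(A*L2+B*M2+C*R2 - C*L - B*M - A*R)
           - y*(A*L+B*M+C*R - C*L0 - B*M0 - A*R0)" unfolding cavg Xp Xm ..
  also have "\<dots> \<in> {c1..c2}"
    using combo[OF x0(1) y0(1) x0(2) y0(2) ABC ABC2, of L c1 c2 M R L2 M2 R2 L0 M0 R0]
      bL bM bR nbp nbm unfolding L_def M_def R_def by blast
  finally show "avg_update g \<beta>0 \<beta>1 (dt / h^2) a h N p j \<in> {c1..c2}" .
qed

end
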